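(* Let $X,Y$ be smooth paracompact Hausdorff manifolds, $I=(0,1]$, and let $(u_\varepsilon)_{\varepsilon\in I}\in \mathcal{C}^\infty(X,Y)^I$. The following conditions are equivalent: (i) $(u_\varepsilon)_\varepsilon$ is c-bounded. (ii) $(f\circ u_\varepsilon)_\varepsilon$ is c-bounded for all $f\in\mathcal{C}^\infty(Y)$. (iii) $(f\circ u_\varepsilon)_\varepsilon$ is moderate of order zero for all $f\in\mathcal{C}^\infty(Y)$, i.e., for every $f\in\mathcal{C}^\infty(Y)$ and every compact $K\subseteq X$ there is $N\in\mathbb{N}$ with $\sup_{p\in K}|f\circ u_\varepsilon(p)|=O(\varepsilon^{-N})$ as $\varepsilon\to0$. (iv) $(u_\varepsilon(x_\varepsilon))_\varepsilon\in Y_c$ for all $(x_\varepsilon)_\varepsilon\in X_c$.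
   Context: Smooth scalar functions are real- or complex-valued. A net $(v_\varepsilon)_\varepsilon$ of maps $X\to M$ ($M$ a manifold, e.g. $M=Y$ or $M=\mathbb{R},\mathbb{C}$) is called c-bounded if for every compact $K\subseteq X$ there exist $\varepsilon_0>0$ and a compact $K'\subseteq M$ with $v_\varepsilon(K)\subseteq K'$ for all $\varepsilon<\varepsilon_0$. For a manifold $M$, $M_c$ denotes the set of compactly supported nets $(p_\varepsilon)_\varepsilon\in M^I$, i.e., nets for which there exist a compact $K\subseteq M$ and $\varepsilon_0>0$ with $p_\varepsilon\in K$ for all $\varepsilon<\varepsilon_0$. *)

theory Defs
  imports "HOL-Analysis.Analysis"
begin

fun ck_on :: "nat \<Rightarrow> 'a::real_normed_vector set \<Rightarrow> ('a \<Rightarrow> 'b::real_normed_vector) \<Rightarrow> bool" where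
  "ck_on 0 S f = continuous_on S f"
| "ck_on (Suc k) S f =
     (\<exists>f'. (\<forall>x\<in>S. (f has_derivative f' x) (at x)) \<and> (\<forall>v. ck_on k S (\<lambda>x. f' x v)))"

definition smooth_on :: "'a::real_normed_vector set \<Rightarrow> ('a \<Rightarrow> 'b::real_normed_vector) \<Rightarrow> bool" where
  "smooth_on S f \<longleftrightarrow> (\<forall>k. ck_on k S f)"

definition paracompact_space :: "'a topology \<Rightarrow> bool" where
  "paracompact_space T \<longleftrightarrow>
     (\<forall>\<U>. (\<forall>U\<in>\<U>. openin T U) \<and> \<Union>\<U> = topspace T \<longrightarrow>
        (\<exists>\<V>. (\<forall>V\<in>\<V>. openin T V) \<and> \<Union>\<V> = topspace T \<and>
             (\<forall>V\<in>\<V>. \<exists>U\<in>\<U>. V \<subseteq> U) \<and> locally_finite_in T \<V>))"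

definition chart :: "'a topology \<Rightarrow> 'a set \<Rightarrow> ('a \<Rightarrow> 'e::euclidean_space) \<Rightarrow> bool" where
  "chart T U \<phi> \<longleftrightarrow> openin T U \<and> open (\<phi> ` U) \<and>
     homeomorphic_map (subtopology T U) (top_of_set (\<phi> ` U)) \<phi>"

definition smooth_manifold :: "'a topology \<Rightarrow> ('a set \<times> ('a \<Rightarrow> 'e::euclidean_space)) set \<Rightarrow> bool" where
  "smooth_manifold T A \<longleftrightarrow>
     Hausdorff_space T \<and> paracompact_space T \<and>
     \<Union>(fst ` A) = topspace T \<and>
     (\<forall>(U,\<phi>)\<in>A. chart T U \<phi>) \<and>
     (\<forall>(U,\<phi>)\<in>A. \<forall>(V,\<psi>)\<in>A. smooth_on (\<phi> ` (U \<inter> V)) (\<psi> \<circ> inv_into U \<phi>))"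

definition smooth_fun :: "('a set \<times> ('a \<Rightarrow> 'e::euclidean_space)) set \<Rightarrow> ('a \<Rightarrow> 'k::real_normed_vector) \<Rightarrow> bool" where
  "smooth_fun A f \<longleftrightarrow> (\<forall>(U,\<phi>)\<in>A. smooth_on (\<phi> ` U) (f \<circ> inv_into U \<phi>))"

definition smooth_map ::
  "'a topology \<Rightarrow> ('a set \<times> ('a \<Rightarrow> 'e::euclidean_space)) set \<Rightarrow>
   'b topology \<Rightarrow> ('b set \<times> ('b \<Rightarrow> 'f::euclidean_space)) set \<Rightarrow> ('a \<Rightarrow> 'b) \<Rightarrow> bool" where
  "smooth_map TX AX TY AY u \<longleftrightarrow> continuous_map TX TY u \<and>
     (\<forall>(U,\<phi>)\<in>AX. \<forall>(V,\<psi>)\<in>AY. smooth_on (\<phi> ` (U \<inter> u -` V)) (\<psi> \<circ> u \<circ> inv_into U \<phi>))"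

definition c_bounded :: "'a topology \<Rightarrow> 'm topology \<Rightarrow> (real \<Rightarrow> 'a \<Rightarrow> 'm) \<Rightarrow> bool" where
  "c_bounded TX TM v \<longleftrightarrow>
     (\<forall>K. compactin TX K \<longrightarrow>
        (\<exists>\<epsilon>0>0. \<exists>K'. compactin TM K' \<and>
            (\<forall>\<epsilon>\<in>{0<..1}. \<epsilon> < \<epsilon>0 \<longrightarrow> v \<epsilon> ` K \<subseteq> K')))"

definition cs_nets :: "'m topology \<Rightarrow> (real \<Rightarrow> 'm) set" where
  "cs_nets TM = {p. \<exists>K \<epsilon>0. compactin TM K \<and> \<epsilon>0 > 0 \<and>
                        (\<forall>\<epsilon>\<in>{0<..1}. \<epsilon> < \<epsilon>0 \<longrightarrow> p \<epsilon> \<in> K)}"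

definition moderate0 :: "'a topology \<Rightarrow> (real \<Rightarrow> 'a \<Rightarrow> 'k::real_normed_vector) \<Rightarrow> bool" where
  "moderate0 TX g \<longleftrightarrow>
     (\<forall>K. compactin TX K \<longrightarrow>
        (\<exists>N::nat. \<exists>C \<epsilon>0. \<epsilon>0 > 0 \<and>
           (\<forall>\<epsilon>\<in>{0<..1}. \<epsilon> < \<epsilon>0 \<longrightarrow> (\<forall>p\<in>K. norm (g \<epsilon> p) \<le> C * \<epsilon> powr (- real N)))))"

end

theory Submission
  imports Defs "HOL-Computational_Algebra.Polynomial"
begin

lemma ck_SucI:
  "(\<And>x. x \<in> S \<Longrightarrow> (f has_derivative f' x) (at x)) \<Longrightarrow> (\<And>v. ck_on k S (\<lambda>x. f' x v)) \<Longrightarrow> ck_on (Suc k) S f"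
  by auto

lemma ck_SucE:
  assumes "ck_on (Suc k) S f"
  obtains f' where "\<And>x. x \<in> S \<Longrightarrow> (f has_derivative f' x) (at x)" "\<And>v. ck_on k S (\<lambda>x. f' x v)"
  using assms by auto

lemma ck_mono: "ck_on (Suc k) S f \<Longrightarrow> ck_on k S f"
proof (induction k arbitrary: f)
  case 0
  then obtain f' where "\<And>x. x \<in> S \<Longrightarrow> (f has_derivative f' x) (at x)" by (auto elim: ck_SucE)
  then show ?case
    by (auto intro!: continuous_at_imp_continuous_on has_derivative_continuous)
next
  case (Suc k)
  obtain f' where "\<And>x. x \<in> S \<Longrightarrow> (f has_derivative f' x) (at x)" "\<And>v. ck_on (Suc k) S (\<lambda>x. f' x v)"
    by (rule ck_SucE[OF Suc.prems]) blast
  then show ?case using Suc.IH by (intro ck_SucI) auto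
qed

lemma ck_le: "m \<le> n \<Longrightarrow> ck_on n S f \<Longrightarrow> ck_on m S f"
proof (induction n)
  case 0 then show ?case by simp
next
  case (Suc n) then show ?case using ck_mono le_Suc_eq by blast
qed

lemma ck_subset: "ck_on k S f \<Longrightarrow> T \<subseteq> S \<Longrightarrow> ck_on k T f"
proof (induction k arbitrary: f)
  case 0 then show ?case by (auto intro: continuous_on_subset)
next
  case (Suc k)
  obtain f' where "\<And>x. x \<in> S \<Longrightarrow> (f has_derivative f' x) (at x)" "\<And>v. ck_on k S (\<lambda>x. f' x v)"
    by (rule ck_SucE[OF Suc.prems(1)]) blast
  then show ?case using Suc by (intro ck_SucI) auto
qed

lemma ck_cong: "open S \<Longrightarrow> (\<And>x. x \<in> S \<Longrightarrow> f x = g x) \<Longrightarrow> ck_on k S f \<Longrightarrow> ck_on k S g"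
proof (cases k)
  case 0
  assume "\<And>x. x \<in> S \<Longrightarrow> f x = g x" "ck_on k S f"
  then show ?thesis using 0 by (auto intro: continuous_on_cong[THEN iffD1])
next
  case (Suc m)
  assume S: "open S" and eq: "\<And>x. x \<in> S \<Longrightarrow> f x = g x" and ck: "ck_on k S f"
  obtain f' where f': "\<And>x. x \<in> S \<Longrightarrow> (f has_derivative f' x) (at x)" "\<And>v. ck_on m S (\<lambda>x. f' x v)"
    by (rule ck_SucE[OF ck[unfolded Suc]]) blast
  have "\<And>x. x \<in> S \<Longrightarrow> (g has_derivative f' x) (at x)"
    using f'(1) S eq by (metis has_derivative_transform_within_open)
  then show ?thesis using Suc f'(2) by (auto intro: ck_SucI)
qed

lemma ck_local:
  assumes "open S" "\<And>x. x \<in> S \<Longrightarrow> \<exists>W. open W \<and> x \<in> W \<and> W \<subseteq> S \<and> ck_on k W f"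
  shows "ck_on k S f"
  using assms
proof (induction k arbitrary: f)
  case 0
  have "isCont f x" if xS: "x \<in> S" for x
  proof -
    obtain W where W: "open W" "x \<in> W" "W \<subseteq> S" "continuous_on W f" using 0(2)[OF xS] by auto
    then show ?thesis using continuous_on_eq_continuous_at by blast
  qed
  then show ?case by (simp add: continuous_at_imp_continuous_on)
next
  case (Suc k)
  define F where "F x = frechet_derivative f (at x)" for x
  have loc: "\<exists>W. open W \<and> x \<in> W \<and> W \<subseteq> S \<and> (\<forall>y\<in>W. (f has_derivative F y) (at y)) \<and> (\<forall>v. ck_on k W (\<lambda>y. F y v))"
    if xS: "x \<in> S" for x
  proof -
    obtain W where W: "open W" "x \<in> W" "W \<subseteq> S" "ck_on (Suc k) W f" using Suc(3)[OF xS] by auto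
    obtain f' where f': "\<And>y. y \<in> W \<Longrightarrow> (f has_derivative f' y) (at y)" "\<And>v. ck_on k W (\<lambda>y. f' y v)"
      by (rule ck_SucE[OF W(4)]) blast
    have eq: "\<forall>y\<in>W. F y = f' y" using f'(1) unfolding F_def by (metis frechet_derivative_at)
    have "\<forall>v. ck_on k W (\<lambda>y. F y v)"
      using f'(2) W(1) eq by (auto intro: ck_cong[of W "\<lambda>y. f' y _"])
    then show ?thesis using W eq f' by auto
  qed
  have "\<And>x. x \<in> S \<Longrightarrow> (f has_derivative F x) (at x)" using loc by blast
  moreover have "ck_on k S (\<lambda>y. F y v)" for v
    using Suc.IH[OF Suc(2)] loc by meson
  ultimately show ?case by (rule ck_SucI)
qed

lemma ck_const: "ck_on k S (\<lambda>x. c)"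
proof (induction k arbitrary: c)
  case 0 then show ?case by simp
next
  case (Suc k)
  show ?case by (rule ck_SucI[where f'="\<lambda>x v. 0"]) (auto simp: Suc)
qed

lemma ck_linear: "bounded_linear L \<Longrightarrow> ck_on k S g \<Longrightarrow> ck_on k S (\<lambda>x. L (g x))"
proof (induction k arbitrary: g)
  case 0 then show ?case by (simp add: bounded_linear.continuous_on)
next
  case (Suc k)
  obtain g' where g': "\<And>x. x \<in> S \<Longrightarrow> (g has_derivative g' x) (at x)" "\<And>v. ck_on k S (\<lambda>x. g' x v)"
    by (rule ck_SucE[OF Suc.prems(2)]) blast
  show ?case
  proof (rule ck_SucI[where f'="\<lambda>x v. L (g' x v)"])
    show "((\<lambda>x. L (g x)) has_derivative (\<lambda>v. L (g' x v))) (at x)" if "x \<in> S" for x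
      using g'(1)[OF that] Suc(2) by (auto intro: bounded_linear.has_derivative)
    show "ck_on k S (\<lambda>x. L (g' x v))" for v using Suc g' by auto
  qed
qed

lemma ck_add: "ck_on k S f \<Longrightarrow> ck_on k S g \<Longrightarrow> ck_on k S (\<lambda>x. f x + g x)"
proof (induction k arbitrary: f g)
  case 0 then show ?case by (simp add: continuous_on_add)
next
  case (Suc k)
  obtain f' where f': "\<And>x. x \<in> S \<Longrightarrow> (f has_derivative f' x) (at x)" "\<And>v. ck_on k S (\<lambda>x. f' x v)"
    by (rule ck_SucE[OF Suc.prems(1)]) blast
  obtain g' where g': "\<And>x. x \<in> S \<Longrightarrow> (g has_derivative g' x) (at x)" "\<And>v. ck_on k S (\<lambda>x. g' x v)"
    by (rule ck_SucE[OF Suc.prems(2)]) blast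
  show ?case
  proof (rule ck_SucI[where f'="\<lambda>x v. f' x v + g' x v"])
    show "((\<lambda>x. f x + g x) has_derivative (\<lambda>v. f' x v + g' x v)) (at x)" if "x \<in> S" for x
      using f' g' that by (auto intro: has_derivative_add)
    show "ck_on k S (\<lambda>x. f' x v + g' x v)" for v using Suc.IH f' g' by auto
  qed
qed

lemma ck_bilinear:
  assumes "bounded_bilinear P"
  shows "ck_on k S f \<Longrightarrow> ck_on k S g \<Longrightarrow> ck_on k S (\<lambda>x. P (f x) (g x))"
proof (induction k arbitrary: f g)
  case 0 then show ?case
    using bounded_bilinear.continuous_on[OF assms] by auto
next
  case (Suc k)
  obtain f' where f': "\<And>x. x \<in> S \<Longrightarrow> (f has_derivative f' x) (at x)" "\<And>v. ck_on k S (\<lambda>x. f' x v)"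
    by (rule ck_SucE[OF Suc.prems(1)]) blast
  obtain g' where g': "\<And>x. x \<in> S \<Longrightarrow> (g has_derivative g' x) (at x)" "\<And>v. ck_on k S (\<lambda>x. g' x v)"
    by (rule ck_SucE[OF Suc.prems(2)]) blast
  have fk: "ck_on k S f" and gk: "ck_on k S g" using Suc.prems ck_mono by blast+
  show ?case
  proof (rule ck_SucI[where f'="\<lambda>x v. P (f x) (g' x v) + P (f' x v) (g x)"])
    show "((\<lambda>x. P (f x) (g x)) has_derivative (\<lambda>v. P (f x) (g' x v) + P (f' x v) (g x))) (at x)"
      if "x \<in> S" for x
      using f'(1)[OF that] g'(1)[OF that] by (rule bounded_bilinear.FDERIV[OF assms])
    show "ck_on k S (\<lambda>x. P (f x) (g' x v) + P (f' x v) (g x))" for v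
      by (rule ck_add; rule Suc.IH) (use fk gk f' g' in auto)
  qed
qed

lemma ck_sum: "finite F \<Longrightarrow> (\<And>n. n \<in> F \<Longrightarrow> ck_on k S (h n)) \<Longrightarrow> ck_on k S (\<lambda>x. \<Sum>n\<in>F. h n x)"
  by (induction F rule: finite_induct) (auto intro: ck_add ck_const)

lemma smooth_deriv:
  assumes "open S" "\<forall>k. ck_on k S f"
  shows "\<exists>f'. (\<forall>x\<in>S. (f has_derivative f' x) (at x)) \<and> (\<forall>v k. ck_on k S (\<lambda>x. f' x v))"
proof -
  have c1: "ck_on (Suc 0) S f" using assms(2) by blast
  obtain f' where f': "\<And>x. x \<in> S \<Longrightarrow> (f has_derivative f' x) (at x)"
    by (rule ck_SucE[OF c1]) blast
  have "ck_on k S (\<lambda>x. f' x v)" for v k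
  proof -
    have c2: "ck_on (Suc k) S f" using assms(2) by blast
    obtain f'' where f'': "\<And>x. x \<in> S \<Longrightarrow> (f has_derivative f'' x) (at x)" "\<And>v. ck_on k S (\<lambda>x. f'' x v)"
      by (rule ck_SucE[OF c2]) blast
    have "\<forall>x\<in>S. f'' x = f' x" using f' f'' frechet_derivative_at by metis
    then show ?thesis using f''(2) assms(1) by (auto intro: ck_cong[of S "\<lambda>x. f'' x v"])
  qed
  then show ?thesis using f' by auto
qed

lemma ck_comp_real:
  fixes g :: "'a::real_normed_vector \<Rightarrow> real" and \<rho> :: "real \<Rightarrow> real"
  shows "\<forall>j. ck_on j UNIV \<rho> \<Longrightarrow> ck_on k S g \<Longrightarrow> ck_on k S (\<lambda>x. \<rho> (g x))"
proof (induction k arbitrary: \<rho> g)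
  case 0
  then have "continuous_on UNIV \<rho>" by (metis ck_on.simps(1))
  then show ?case using 0 by (auto intro: continuous_on_compose2)
next
  case (Suc k)
  obtain r' where r': "\<forall>x. (\<rho> has_derivative r' x) (at x)" "\<forall>v j. ck_on j UNIV (\<lambda>x. r' x v)"
    using smooth_deriv[of UNIV \<rho>] Suc.prems by auto
  obtain g' where g': "\<And>x. x \<in> S \<Longrightarrow> (g has_derivative g' x) (at x)" "\<And>v. ck_on k S (\<lambda>x. g' x v)"
    by (rule ck_SucE[OF Suc.prems(2)]) blast
  have gk: "ck_on k S g" using Suc.prems ck_mono by blast
  have lin: "r' t w = w * r' t 1" for t w
  proof -
    have "linear (r' t)" using r'(1) has_derivative_linear by blast
    then have "r' t (w * 1) = w * r' t 1" by (rule linear_scale_real)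
    then show ?thesis by simp
  qed
  show ?case
  proof (rule ck_SucI[where f'="\<lambda>x v. g' x v * r' (g x) 1"])
    show "((\<lambda>x. \<rho> (g x)) has_derivative (\<lambda>v. g' x v * r' (g x) 1)) (at x)" if "x \<in> S" for x
    proof -
      have "((\<lambda>x. \<rho> (g x)) has_derivative (\<lambda>v. r' (g x) (g' x v))) (at x)"
        using g'(1)[OF that] r'(1) by (auto intro: has_derivative_compose)
      then show ?thesis by (subst (asm) lin) simp
    qed
    show "ck_on k S (\<lambda>x. g' x v * r' (g x) 1)" for v
      by (rule ck_bilinear[OF bounded_bilinear_mult]) (use g' Suc.IH[of "\<lambda>t. r' t 1" g] r' gk in auto)
  qed
qed


definition hp :: "real poly \<Rightarrow> real \<Rightarrow> real" where
  "hp p t = (if 0 < t then poly p (1/t) * exp (-(1/t)) else 0)"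

definition Dp :: "real poly \<Rightarrow> real poly" where
  "Dp p = [:0,0,1:] * (p - pderiv p)"

lemma poly_exp_lim: "((\<lambda>s. poly q s / exp s) \<longlongrightarrow> (0::real)) at_top"
proof -
  have "((\<lambda>s. \<Sum>i\<le>degree q. coeff q i * (s ^ i / exp s)) \<longlongrightarrow> (\<Sum>i\<le>degree q. coeff q i * 0)) at_top"
    by (intro tendsto_sum tendsto_mult tendsto_const tendsto_power_div_exp_0)
  then show ?thesis by (simp add: poly_altdef sum_divide_distrib)
qed

lemma hp_deriv0: "(hp p has_real_derivative 0) (at 0)"
proof -
  have R: "((\<lambda>h. (hp p (0 + h) - hp p 0) / h) \<longlongrightarrow> 0) (at_right 0)"
  proof -
    have "((\<lambda>s. poly (pCons 0 p) s / exp s) \<longlongrightarrow> (0::real)) at_top" by (rule poly_exp_lim)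
    then have "((\<lambda>h. poly (pCons 0 p) (inverse h) / exp (inverse h)) \<longlongrightarrow> (0::real)) (at_right 0)"
      using filterlim_compose filterlim_inverse_at_top_right by blast
    moreover have "\<forall>\<^sub>F h in at_right 0. poly (pCons 0 p) (inverse h) / exp (inverse h) = (hp p (0 + h) - hp p 0) / h"
      by (auto simp: hp_def exp_minus field_simps eventually_at_right_less eventually_mono intro!: eventually_mono[OF eventually_at_right_less])
    ultimately show ?thesis by (rule Lim_transform_eventually)
  qed
  have L: "((\<lambda>h. (hp p (0 + h) - hp p 0) / h) \<longlongrightarrow> 0) (at_left 0)"
  proof -
    have "\<forall>\<^sub>F h in at_left 0. 0 = (hp p (0 + h) - hp p 0) / h"
    proof -
      have ev: "\<forall>\<^sub>F h in at_left (0::real). h < 0"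
        by (simp add: eventually_at_filter)
      show ?thesis using ev by eventually_elim (simp add: hp_def)
    qed
    then show ?thesis by (rule Lim_transform_eventually[OF tendsto_const])
  qed
  show ?thesis unfolding DERIV_def by (rule filterlim_split_at[OF L R])
qed

lemma hp_deriv: "(hp p has_real_derivative hp (Dp p) t) (at t)"
proof -
  consider "t > 0" | "t < 0" | "t = 0" by linarith
  then show ?thesis
  proof cases
    case 1
    have "((\<lambda>s. poly p (1/s) * exp (-(1/s))) has_real_derivative
            (poly (pderiv p) (1/t) * (- 1 / t^2)) * exp (-(1/t)) + poly p (1/t) * (exp (-(1/t)) * (1/t^2))) (at t)"
      using 1
      by (auto intro!: derivative_eq_intros DERIV_chain2[OF poly_DERIV] simp: power2_eq_square)
    moreover have "(poly (pderiv p) (1/t) * (- 1 / t^2)) * exp (-(1/t)) + poly p (1/t) * (exp (-(1/t)) * (1/t^2))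
         = hp (Dp p) t"
      using 1 by (simp add: hp_def Dp_def algebra_simps power2_eq_square)
    ultimately have "((\<lambda>s. poly p (1/s) * exp (-(1/s))) has_real_derivative hp (Dp p) t) (at t)" by simp
    then show ?thesis
      by (rule has_field_derivative_transform_within_open[where S="{0<..}"]) (use 1 in \<open>auto simp: hp_def\<close>)
  next
    case 2
    have "((\<lambda>s. 0) has_real_derivative hp (Dp p) t) (at t)" using 2 by (simp add: hp_def)
    then show ?thesis
      by (rule has_field_derivative_transform_within_open[where S="{..<0}"]) (use 2 in \<open>auto simp: hp_def\<close>)
  next
    case 3
    then show ?thesis using hp_deriv0 by (simp add: hp_def)
  qed
qed

lemma hp_smult: "hp (smult c q) t = c * hp q t"
  by (simp add: hp_def)

lemma hp_ck: "ck_on k UNIV (hp p)"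
proof (induction k arbitrary: p)
  case 0
  have "isCont (hp p) t" for t using hp_deriv DERIV_isCont by blast
  then show ?case by (simp add: continuous_at_imp_continuous_on)
next
  case (Suc k)
  show ?case
  proof (rule ck_SucI[where f'="\<lambda>t v. hp (Dp p) t * v"])
    show "(hp p has_derivative (\<lambda>v. hp (Dp p) t * v)) (at t)" for t
      using hp_deriv[of p t] by (simp add: has_field_derivative_def)
    show "ck_on k UNIV (\<lambda>t. hp (Dp p) t * v)" for v
      using Suc.IH[of "smult v (Dp p)"] by (simp add: hp_smult mult.commute)
  qed
qed

definition rho :: "real \<Rightarrow> real" where
  "rho t = (if 0 < t then exp (-(1/t)) else 0)"

lemma rho_hp: "rho = hp 1"
  by (auto simp: rho_def hp_def)

lemma rho_smooth: "\<forall>k. ck_on k UNIV rho"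
  using hp_ck by (simp add: rho_hp)

lemma rho_nonneg: "rho t \<ge> 0" and rho_pos: "t > 0 \<Longrightarrow> rho t > 0" and rho_zero: "t \<le> 0 \<Longrightarrow> rho t = 0"
  by (auto simp: rho_def)


lemma chart_sub: "chart T U \<phi> \<Longrightarrow> U \<subseteq> topspace T"
  by (simp add: chart_def openin_subset)

lemma chart_top: "chart T U \<phi> \<Longrightarrow> topspace (subtopology T U) = U"
  using chart_sub by (auto simp: topspace_subtopology)

lemma chart_inj: "chart T U \<phi> \<Longrightarrow> inj_on \<phi> U"
  using homeomorphic_imp_injective_map chart_top unfolding chart_def by metis

lemma chart_inv: "chart T U \<phi> \<Longrightarrow> z \<in> \<phi> ` U \<Longrightarrow> inv_into U \<phi> z \<in> U \<and> \<phi> (inv_into U \<phi> z) = z"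
  by (auto simp: inv_into_into f_inv_into_f)

lemma chart_inv2: "chart T U \<phi> \<Longrightarrow> p \<in> U \<Longrightarrow> inv_into U \<phi> (\<phi> p) = p"
  using chart_inj by (metis inv_into_f_f)

lemma chart_open_image:
  assumes c: "chart T U \<phi>" and W: "openin T W"
  shows "open (\<phi> ` (U \<inter> W))"
proof -
  have h: "homeomorphic_map (subtopology T U) (top_of_set (\<phi> ` U)) \<phi>" and o: "open (\<phi> ` U)"
    using c by (auto simp: chart_def)
  have "openin (subtopology T U) (U \<inter> W)"
    using W by (simp add: openin_subtopology_Int2 inf_commute)
  then have "openin (top_of_set (\<phi> ` U)) (\<phi> ` (U \<inter> W))"
    using homeomorphic_map_openness[OF h] chart_top[OF c] by blast
  then show ?thesis using o openin_open_trans by blast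
qed

lemma chart_preimage_open:
  assumes c: "chart T U \<phi>" and Ob: "open Ob"
  shows "openin T {w \<in> U. \<phi> w \<in> Ob}"
proof -
  have h: "continuous_map (subtopology T U) (top_of_set (\<phi> ` U)) \<phi>"
    using c by (auto simp: chart_def homeomorphic_imp_continuous_map)
  have "openin (top_of_set (\<phi> ` U)) (\<phi> ` U \<inter> Ob)" using Ob by auto
  then have "openin (subtopology T U) {x \<in> topspace (subtopology T U). \<phi> x \<in> \<phi> ` U \<inter> Ob}"
    using openin_continuous_map_preimage[OF h] by blast
  moreover have "{x \<in> topspace (subtopology T U). \<phi> x \<in> \<phi> ` U \<inter> Ob} = {w \<in> U. \<phi> w \<in> Ob}"
    using chart_top[OF c] by auto
  ultimately show ?thesis using c openin_trans_full unfolding chart_def by metis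
qed

lemma chart_preimage_compact:
  assumes c: "chart T U \<phi>" and C: "compact C" "C \<subseteq> \<phi> ` U"
  shows "compactin T {w \<in> U. \<phi> w \<in> C}"
proof -
  have h: "homeomorphic_map (subtopology T U) (top_of_set (\<phi> ` U)) \<phi>"
    using c by (auto simp: chart_def)
  have im: "\<phi> ` {w \<in> U. \<phi> w \<in> C} = C" using C(2) by auto
  have "compactin (top_of_set (\<phi> ` U)) C" using C by (simp add: compactin_subtopology)
  then have "compactin (subtopology T U) {w \<in> U. \<phi> w \<in> C}"
    using homeomorphic_map_compactness[OF h, of "{w \<in> U. \<phi> w \<in> C}"] chart_top[OF c] im by auto
  then show ?thesis by (simp add: compactin_subtopology)
qed

lemma manifold_chart: "smooth_manifold T A \<Longrightarrow> (U, \<phi>) \<in> A \<Longrightarrow> chart T U \<phi>"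
  unfolding smooth_manifold_def by auto

lemma manifold_trans: "smooth_manifold T A \<Longrightarrow> (U, \<phi>) \<in> A \<Longrightarrow> (V, \<psi>) \<in> A \<Longrightarrow>
   smooth_on (\<phi> ` (U \<inter> V)) (\<psi> \<circ> inv_into U \<phi>)"
  unfolding smooth_manifold_def by fast

lemma manifold_cover:
  assumes "smooth_manifold T A" "z \<in> topspace T" shows "\<exists>U \<phi>. (U, \<phi>) \<in> A \<and> z \<in> U"
proof -
  have "z \<in> \<Union>(fst ` A)" using assms unfolding smooth_manifold_def by auto
  then obtain p where "p \<in> A" "z \<in> fst p" by auto
  then show ?thesis by (intro exI[of _ "fst p"] exI[of _ "snd p"]) auto
qed

lemma smooth_fun_cont:
  fixes f :: "'b \<Rightarrow> 'k::real_normed_vector"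
  assumes M: "smooth_manifold T A" and f: "smooth_fun A f"
  shows "continuous_map T euclidean f"
  unfolding continuous_map_def
proof safe
  fix Ob :: "'k set" assume "openin euclidean Ob"
  then have Ob: "open Ob" by simp
  have "{x \<in> topspace T. f x \<in> Ob} = (\<Union>(U,\<phi>)\<in>A. {w \<in> U. \<phi> w \<in> {z \<in> \<phi> ` U. f (inv_into U \<phi> z) \<in> Ob}})"
  proof (safe, goal_cases)
    case (1 x)
    then obtain U \<phi> where "(U,\<phi>) \<in> A" "x \<in> U" using manifold_cover[OF M] by blast
    moreover have "inv_into U \<phi> (\<phi> x) = x" using calculation chart_inv2 manifold_chart[OF M] by metis
    ultimately show ?case using 1 by force
  next
    case (2 x U \<phi>)
    then show ?case using manifold_chart[OF M] chart_sub by blast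
  next
    case (3 x U \<phi>)
    then show ?case using manifold_chart[OF M] chart_inv2 by metis
  qed
  moreover have "openin T {w \<in> U. \<phi> w \<in> {z \<in> \<phi> ` U. f (inv_into U \<phi> z) \<in> Ob}}" if "(U,\<phi>) \<in> A" for U \<phi>
  proof -
    have c: "chart T U \<phi>" using manifold_chart[OF M that] .
    have "smooth_on (\<phi> ` U) (f \<circ> inv_into U \<phi>)"
      using f that unfolding smooth_fun_def by auto
    then have "ck_on 0 (\<phi> ` U) (f \<circ> inv_into U \<phi>)" unfolding smooth_on_def by blast
    then have "continuous_on (\<phi> ` U) (f \<circ> inv_into U \<phi>)" by simp
    then have "open ((f \<circ> inv_into U \<phi>) -` Ob \<inter> \<phi> ` U)"
      using c Ob continuous_on_open_vimage chart_def by blast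
    moreover have "(f \<circ> inv_into U \<phi>) -` Ob \<inter> \<phi> ` U = {z \<in> \<phi> ` U. f (inv_into U \<phi> z) \<in> Ob}" by auto
    ultimately show ?thesis using chart_preimage_open[OF c] by metis
  qed
  ultimately show "openin T {x \<in> topspace T. f x \<in> Ob}" by auto
qed auto


lemma ck_atlas_bump:
  fixes \<psi> :: "'b \<Rightarrow> 'f::euclidean_space" and \<phi> :: "'b \<Rightarrow> 'f"
  assumes Y: "smooth_manifold T A" and UA: "(U, \<phi>) \<in> A" and VA: "(V, \<psi>) \<in> A"
    and b_def: "\<And>w. b w = (if w \<in> V then rho (R - (\<psi> w - c) \<bullet> (\<psi> w - c)) else 0)"
    and S_def: "S = {w \<in> V. \<psi> w \<in> cball c r}" and R: "R = r^2" and r: "r > 0"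
    and cb: "cball c r \<subseteq> \<psi> ` V"
  shows "ck_on k (\<phi> ` U) (\<lambda>z. b (inv_into U \<phi> z))"
proof -
  have cU: "chart T U \<phi>" and cV: "chart T V \<psi>" using manifold_chart[OF Y] UA VA by auto
  have H: "Hausdorff_space T" using Y by (simp add: smooth_manifold_def)
  have Sc: "compactin T S" unfolding S_def by (rule chart_preimage_compact[OF cV compact_cball cb])
  then have Scl: "closedin T S" using H compactin_imp_closedin by blast
  have bS: "w \<in> S" if "b w \<noteq> 0" for w
  proof -
    have wV: "w \<in> V" and "rho (R - (\<psi> w - c) \<bullet> (\<psi> w - c)) \<noteq> 0" using that b_def by (auto split: if_splits)
    then have "R - (\<psi> w - c) \<bullet> (\<psi> w - c) > 0" by (metis not_less rho_zero)
    then have "norm (\<psi> w - c)^2 < r^2" using R by (simp add: power2_norm_eq_inner)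
    then have "norm (\<psi> w - c) \<le> r" using r by (smt (verit) norm_ge_zero power_mono)
    then show ?thesis using wV S_def by (simp add: dist_norm norm_minus_commute)
  qed
  have oU: "open (\<phi> ` U)" using cU chart_def by blast
  show ?thesis
  proof (rule ck_local[OF oU])
    fix z assume z: "z \<in> \<phi> ` U"
    define p where "p = inv_into U \<phi> z"
    have pU: "p \<in> U" and pz: "\<phi> p = z" using chart_inv[OF cU z] p_def by auto
    show "\<exists>W. open W \<and> z \<in> W \<and> W \<subseteq> \<phi> ` U \<and> ck_on k W (\<lambda>z. b (inv_into U \<phi> z))"
    proof (cases "p \<in> V")
      case True
      define W where "W = \<phi> ` (U \<inter> V)"
      have oW: "open W" unfolding W_def using chart_open_image[OF cU] cV chart_def by blast
      have zW: "z \<in> W" using True pU pz W_def by auto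
      have sm: "ck_on k W (\<psi> \<circ> inv_into U \<phi>)"
        using manifold_trans[OF Y UA VA] W_def smooth_on_def by blast
      have lin1: "bounded_linear (\<lambda>x::real. - x)" by (simp add: bounded_linear_minus bounded_linear_ident)
      have "ck_on k W (\<lambda>z. (\<psi> (inv_into U \<phi> z) - c) \<bullet> (\<psi> (inv_into U \<phi> z) - c))"
      proof (rule ck_bilinear[OF bounded_bilinear_inner])
        have "ck_on k W (\<lambda>z. (\<psi> \<circ> inv_into U \<phi>) z + (- c))" by (rule ck_add[OF sm ck_const])
        then show "ck_on k W (\<lambda>z. \<psi> (inv_into U \<phi> z) - c)" by simp
        then show "ck_on k W (\<lambda>z. \<psi> (inv_into U \<phi> z) - c)" .
      qed
      then have "ck_on k W (\<lambda>z. R + - ((\<psi> (inv_into U \<phi> z) - c) \<bullet> (\<psi> (inv_into U \<phi> z) - c)))"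
        by (intro ck_add ck_const ck_linear[OF lin1])
      then have ckf: "ck_on k W (\<lambda>z. rho (R + - ((\<psi> (inv_into U \<phi> z) - c) \<bullet> (\<psi> (inv_into U \<phi> z) - c))))"
        by (rule ck_comp_real[OF rho_smooth])
      have eq: "b (inv_into U \<phi> z') = rho (R + - ((\<psi> (inv_into U \<phi> z') - c) \<bullet> (\<psi> (inv_into U \<phi> z') - c)))"
        if zW': "z' \<in> W" for z'
      proof -
        obtain q where "q \<in> U \<inter> V" "z' = \<phi> q" using zW' W_def by auto
        then have "inv_into U \<phi> z' \<in> V" using chart_inv2[OF cU] by auto
        then show ?thesis using b_def by simp
      qed
      have "ck_on k W (\<lambda>z. b (inv_into U \<phi> z))"
        by (rule ck_cong[OF oW _ ckf]) (simp add: eq)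
      moreover have "W \<subseteq> \<phi> ` U" using W_def by auto
      ultimately show ?thesis using oW zW by blast
    next
      case False
      define W where "W = \<phi> ` (U \<inter> (topspace T - S))"
      have "openin T (topspace T - S)" using Scl by blast
      then have oW: "open W" unfolding W_def using chart_open_image[OF cU] by blast
      have "p \<notin> S" using False S_def by auto
      then have zW: "z \<in> W" using pU pz W_def chart_sub[OF cU] by auto
      have ckf: "ck_on k W (\<lambda>z. 0::real)" by (rule ck_const)
      have eq: "b (inv_into U \<phi> z') = 0" if zW': "z' \<in> W" for z'
      proof -
        obtain q where "q \<in> U" "q \<notin> S" "z' = \<phi> q" using zW' W_def by auto
        then have "inv_into U \<phi> z' \<notin> S" using chart_inv2[OF cU] by auto
        then show ?thesis using bS by blast
      qed
      have "ck_on k W (\<lambda>z. b (inv_into U \<phi> z))"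
        by (rule ck_cong[OF oW _ ckf]) (simp add: eq)
      moreover have "W \<subseteq> \<phi> ` U" using W_def by auto
      ultimately show ?thesis using oW zW by blast
    qed
  qed
qed

lemma bump_sum:
  fixes AY :: "('b set \<times> ('b \<Rightarrow> 'f::euclidean_space)) set"
  assumes Y: "smooth_manifold TY AY"
    and ch: "\<And>n. (V n, \<psi> n) \<in> AY"
    and r: "\<And>n. r n > 0" and cb: "\<And>n. cball (c n) (r n) \<subseteq> \<psi> n ` V n"
    and lf: "\<And>z. z \<in> topspace TY \<Longrightarrow> \<exists>W. openin TY W \<and> z \<in> W \<and>
               finite {n. W \<inter> {w \<in> V n. \<psi> n w \<in> cball (c n) (r n)} \<noteq> {}}"
    and a: "\<And>n. a n \<ge> 0"
  shows "\<exists>f::'b \<Rightarrow> real. smooth_fun AY f \<and> (\<forall>n. \<forall>w\<in>V n. \<psi> n w = c n \<longrightarrow> a n * rho ((r n)^2) \<le> f w)"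
proof -
  define S where "S n = {w \<in> V n. \<psi> n w \<in> cball (c n) (r n)}" for n
  define b where "b n w = (if w \<in> V n then rho ((r n)^2 - (\<psi> n w - c n) \<bullet> (\<psi> n w - c n)) else 0)" for n w
  define f where "f w = (\<Sum>m\<in>{m. b m w \<noteq> 0}. a m * b m w)" for w
  have bS: "w \<in> S n" if "b n w \<noteq> 0" for n w
  proof -
    have wV: "w \<in> V n" and "rho ((r n)^2 - (\<psi> n w - c n) \<bullet> (\<psi> n w - c n)) \<noteq> 0"
      using that b_def by (auto split: if_splits)
    then have "(r n)^2 - (\<psi> n w - c n) \<bullet> (\<psi> n w - c n) > 0" by (metis not_less rho_zero)
    then have "norm (\<psi> n w - c n)^2 < (r n)^2" by (simp add: power2_norm_eq_inner)
    then have "norm (\<psi> n w - c n) \<le> r n" using r[of n] by (smt (verit) norm_ge_zero power_mono)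
    then show ?thesis using wV S_def by (simp add: dist_norm norm_minus_commute)
  qed
  have bnn: "b n w \<ge> 0" for n w by (simp add: b_def rho_nonneg)
  have lf': "\<exists>W. openin TY W \<and> z \<in> W \<and> finite {n. W \<inter> S n \<noteq> {}}" if "z \<in> topspace TY" for z
    using lf[OF that] S_def by simp
  have fin: "finite {m. b m w \<noteq> 0}" if wT: "w \<in> topspace TY" for w
  proof -
    obtain W where W: "openin TY W" "w \<in> W" "finite {n. W \<inter> S n \<noteq> {}}" using lf'[OF wT] by blast
    have "{m. b m w \<noteq> 0} \<subseteq> {n. W \<inter> S n \<noteq> {}}" using bS W(2) by blast
    then show ?thesis using W(3) finite_subset by blast
  qed
  have bsm: "ck_on k (\<phi> ` U) (\<lambda>z. b n (inv_into U \<phi> z))" if "(U, \<phi>) \<in> AY" for U \<phi> k n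
    by (rule ck_atlas_bump[OF Y that ch[of n] _ refl refl r[of n] cb[of n]]) (simp add: b_def)
  have "smooth_fun AY f"
    unfolding smooth_fun_def smooth_on_def
  proof (clarify)
    fix U \<phi> k assume UA: "(U, \<phi>) \<in> AY"
    have cU: "chart TY U \<phi>" using manifold_chart[OF Y UA] .
    have oU: "open (\<phi> ` U)" using cU chart_def by blast
    show "ck_on k (\<phi> ` U) (f \<circ> inv_into U \<phi>)"
    proof (rule ck_local[OF oU])
      fix z assume z: "z \<in> \<phi> ` U"
      define p where "p = inv_into U \<phi> z"
      have pU: "p \<in> U" and pz: "\<phi> p = z" using chart_inv[OF cU z] p_def by auto
      have "p \<in> topspace TY" using pU chart_sub[OF cU] by auto
      then obtain W0 where W0: "openin TY W0" "p \<in> W0" "finite {n. W0 \<inter> S n \<noteq> {}}" using lf' by blast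
      define F where "F = {n. W0 \<inter> S n \<noteq> {}}"
      define W where "W = \<phi> ` (U \<inter> W0)"
      have oW: "open W" unfolding W_def using chart_open_image[OF cU W0(1)] .
      have zW: "z \<in> W" using pU pz W0(2) W_def by auto
      have WU: "W \<subseteq> \<phi> ` U" using W_def by auto
      have ckf: "ck_on k W (\<lambda>z. \<Sum>m\<in>F. a m * b m (inv_into U \<phi> z))"
        by (rule ck_sum) (use W0(3) F_def in simp,
            rule ck_subset[OF ck_linear[OF bounded_linear_mult_right bsm[OF UA]] WU])
      have eq: "(\<Sum>m\<in>F. a m * b m (inv_into U \<phi> z')) = (f \<circ> inv_into U \<phi>) z'" if zW': "z' \<in> W" for z'
      proof -
        obtain q where q: "q \<in> U" "q \<in> W0" "z' = \<phi> q" using zW' W_def by auto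
        then have iq: "inv_into U \<phi> z' = q" using chart_inv2[OF cU] by auto
        have sub: "{m. b m q \<noteq> 0} \<subseteq> F" using bS q(2) F_def by blast
        have "(\<Sum>m\<in>F. a m * b m q) = (\<Sum>m\<in>{m. b m q \<noteq> 0}. a m * b m q)"
          by (rule sum.mono_neutral_right) (use W0(3) F_def sub in auto)
        then show ?thesis using iq f_def by simp
      qed
      have "ck_on k W (f \<circ> inv_into U \<phi>)"
        by (rule ck_cong[OF oW _ ckf]) (simp add: eq)
      then show "\<exists>W. open W \<and> z \<in> W \<and> W \<subseteq> \<phi> ` U \<and> ck_on k W (f \<circ> inv_into U \<phi>)"
        using oW zW WU by blast
    qed
  qed
  moreover have "a n * rho ((r n)^2) \<le> f w" if "w \<in> V n" "\<psi> n w = c n" for n w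
  proof -
    have "b n w = rho ((r n)^2)" using that b_def by simp
    moreover have "rho ((r n)^2) > 0" using r[of n] by (simp add: rho_pos)
    moreover have "w \<in> topspace TY" using that(1) chart_sub manifold_chart[OF Y ch[of n]] by blast
    ultimately have "n \<in> {m. b m w \<noteq> 0}" "finite {m. b m w \<noteq> 0}" using fin by auto
    then have "a n * b n w \<le> (\<Sum>m\<in>{m. b m w \<noteq> 0}. a m * b m w)"
      by (intro member_le_sum) (auto intro: mult_nonneg_nonneg a bnn)
    then show ?thesis using \<open>b n w = rho ((r n)^2)\<close> f_def by simp
  qed
  ultimately show ?thesis by blast
qed


lemma lf_compact:
  assumes lf: "locally_finite_in X \<V>" and Q: "compactin X Q"
  shows "finite {V \<in> \<V>. V \<inter> Q \<noteq> {}}"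
proof -
  define \<U> where "\<U> = {W. openin X W \<and> finite {V \<in> \<V>. V \<inter> W \<noteq> {}}}"
  have "Q \<subseteq> \<Union>\<U>"
  proof
    fix x assume "x \<in> Q"
    then have "x \<in> topspace X" using Q compactin_subset_topspace by blast
    then obtain W where "openin X W" "x \<in> W" "finite {U \<in> \<V>. U \<inter> W \<noteq> {}}"
      using lf unfolding locally_finite_in_def by blast
    then show "x \<in> \<Union>\<U>" unfolding \<U>_def by blast
  qed
  moreover have "\<forall>U\<in>\<U>. openin X U" unfolding \<U>_def by blast
  ultimately obtain \<F> where F: "finite \<F>" "\<F> \<subseteq> \<U>" "Q \<subseteq> \<Union>\<F>"
    using Q unfolding compactin_def by meson
  have "{V \<in> \<V>. V \<inter> Q \<noteq> {}} \<subseteq> (\<Union>W\<in>\<F>. {V \<in> \<V>. V \<inter> W \<noteq> {}})"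
    using F(3) by blast
  moreover have "finite (\<Union>W\<in>\<F>. {V \<in> \<V>. V \<inter> W \<noteq> {}})"
    using F(1,2) unfolding \<U>_def by auto
  ultimately show ?thesis using finite_subset by blast
qed

lemma escape:
  fixes AY :: "('b set \<times> ('b \<Rightarrow> 'f::euclidean_space)) set" and u :: "real \<Rightarrow> 'a \<Rightarrow> 'b"
  assumes Y: "smooth_manifold TY AY"
    and ucont: "\<And>\<epsilon>. \<epsilon> \<in> {0<..1} \<Longrightarrow> u \<epsilon> ` K \<subseteq> topspace TY"
    and nb: "\<And>L e0. compactin TY L \<Longrightarrow> e0 > 0 \<Longrightarrow> \<exists>\<epsilon>\<in>{0<..1}. \<epsilon> < e0 \<and> \<not> (u \<epsilon> ` K \<subseteq> L)"
  shows "\<exists>eps xs V \<psi> r. (\<forall>n. eps n \<in> {0<..1} \<and> eps n < 1 / (real n + 1) \<and> eps (Suc n) < eps n \<and> xs n \<in> K \<and>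
            (V n, \<psi> n) \<in> AY \<and> u (eps n) (xs n) \<in> V n \<and> r n > 0 \<and>
            cball (\<psi> n (u (eps n) (xs n))) (r n) \<subseteq> \<psi> n ` V n)
     \<and> (\<forall>z\<in>topspace TY. \<exists>W. openin TY W \<and> z \<in> W \<and>
            finite {n. W \<inter> {w \<in> V n. \<psi> n w \<in> cball (\<psi> n (u (eps n) (xs n))) (r n)} \<noteq> {}})
     \<and> (\<forall>C. compactin TY C \<longrightarrow>
            finite {n. C \<inter> {w \<in> V n. \<psi> n w \<in> cball (\<psi> n (u (eps n) (xs n))) (r n)} \<noteq> {}})"
proof -
  have H: "Hausdorff_space TY" and PC: "paracompact_space TY" using Y by (auto simp: smooth_manifold_def)
  define \<U> where "\<U> = {U. openin TY U \<and> (\<exists>C. compactin TY C \<and> U \<subseteq> C)}"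
  have cov: "\<Union>\<U> = topspace TY"
  proof
    show "\<Union>\<U> \<subseteq> topspace TY" unfolding \<U>_def using openin_subset by blast
    show "topspace TY \<subseteq> \<Union>\<U>"
    proof
      fix z assume z: "z \<in> topspace TY"
      obtain V \<psi> where V: "(V, \<psi>) \<in> AY" "z \<in> V" using manifold_cover[OF Y z] by blast
      have cV: "chart TY V \<psi>" using manifold_chart[OF Y V(1)] .
      have "open (\<psi> ` V)" using cV chart_def by blast
      then obtain e where e: "e > 0" "cball (\<psi> z) e \<subseteq> \<psi> ` V" using V(2) open_contains_cball by blast
      have "openin TY {w \<in> V. \<psi> w \<in> ball (\<psi> z) e}" by (rule chart_preimage_open[OF cV open_ball])
      moreover have "compactin TY {w \<in> V. \<psi> w \<in> cball (\<psi> z) e}"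
        by (rule chart_preimage_compact[OF cV compact_cball e(2)])
      moreover have "{w \<in> V. \<psi> w \<in> ball (\<psi> z) e} \<subseteq> {w \<in> V. \<psi> w \<in> cball (\<psi> z) e}" by auto
      moreover have "z \<in> {w \<in> V. \<psi> w \<in> ball (\<psi> z) e}" using V(2) e(1) by simp
      ultimately show "z \<in> \<Union>\<U>" unfolding \<U>_def by blast
    qed
  qed
  obtain \<V> where VV: "\<forall>V\<in>\<V>. openin TY V" "\<Union>\<V> = topspace TY" "\<forall>V\<in>\<V>. \<exists>U\<in>\<U>. V \<subseteq> U"
    "locally_finite_in TY \<V>"
  proof -
    have oU: "\<forall>U\<in>\<U>. openin TY U" unfolding \<U>_def by blast
    show ?thesis
      using PC[unfolded paracompact_space_def, rule_format, OF conjI[OF oU cov]] that by blast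
  qed
  have exC: "\<exists>C. compactin TY C \<and> V \<subseteq> C" if VV': "V \<in> \<V>" for V
  proof -
    obtain U where U: "U \<in> \<U>" "V \<subseteq> U" using VV(3) VV' by blast
    then obtain C where "compactin TY C" "U \<subseteq> C" unfolding \<U>_def by blast
    then show ?thesis using U(2) by blast
  qed
  then have "\<forall>V\<in>\<V>. \<exists>C. compactin TY C \<and> V \<subseteq> C" by blast
  then obtain Cf where Cf: "\<And>V. V \<in> \<V> \<Longrightarrow> compactin TY (Cf V) \<and> V \<subseteq> Cf V"
    using bchoice[of \<V> "\<lambda>V C. compactin TY C \<and> V \<subseteq> C"] by blast
  define Sof where "Sof \<epsilon> x V \<psi> r = {w \<in> V. \<psi> w \<in> cball (\<psi> (u \<epsilon> x)) r}"
    for \<epsilon> x V and \<psi> :: "'b \<Rightarrow> 'f" and r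
  have step: "\<exists>\<epsilon> x V \<psi> r L'. \<epsilon> \<in> {0<..1} \<and> \<epsilon> < e0 \<and> x \<in> K \<and> (V, \<psi>) \<in> AY \<and> u \<epsilon> x \<in> V \<and> r > 0 \<and>
      cball (\<psi> (u \<epsilon> x)) r \<subseteq> \<psi> ` V \<and> compactin TY L' \<and> L \<subseteq> L' \<and> Sof \<epsilon> x V \<psi> r \<subseteq> L' \<and>
      Sof \<epsilon> x V \<psi> r \<inter> L = {} \<and> (\<forall>W\<in>\<V>. W \<inter> Sof \<epsilon> x V \<psi> r \<noteq> {} \<longrightarrow> W \<subseteq> L')"
    if L: "compactin TY L" and e0: "e0 > 0" for L e0
  proof -
    obtain \<epsilon> where \<epsilon>: "\<epsilon> \<in> {0<..1}" "\<epsilon> < e0" "\<not> (u \<epsilon> ` K \<subseteq> L)" using nb[OF L e0] by blast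
    then obtain x where x: "x \<in> K" "u \<epsilon> x \<notin> L" by blast
    define y where "y = u \<epsilon> x"
    have yT: "y \<in> topspace TY" using ucont[OF \<epsilon>(1)] x(1) y_def by blast
    obtain V \<psi> where V: "(V, \<psi>) \<in> AY" "y \<in> V" using manifold_cover[OF Y yT] by blast
    have cV: "chart TY V \<psi>" using manifold_chart[OF Y V(1)] .
    define Oo where "Oo = topspace TY - L"
    have oO: "openin TY Oo" unfolding Oo_def using compactin_imp_closedin[OF H L] by blast
    have "open (\<psi> ` (V \<inter> Oo))" by (rule chart_open_image[OF cV oO])
    moreover have "\<psi> y \<in> \<psi> ` (V \<inter> Oo)" using V(2) yT x(2) y_def Oo_def by auto
    ultimately obtain r where r: "r > 0" "cball (\<psi> y) r \<subseteq> \<psi> ` (V \<inter> Oo)" using open_contains_cball by blast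
    have cb: "cball (\<psi> y) r \<subseteq> \<psi> ` V" using r(2) by auto
    define S where "S = Sof \<epsilon> x V \<psi> r"
    have SVO: "S \<subseteq> V \<inter> Oo"
    proof
      fix w assume "w \<in> S"
      then have w: "w \<in> V" "\<psi> w \<in> \<psi> ` (V \<inter> Oo)" using r(2) unfolding S_def Sof_def y_def by auto
      then obtain q where "q \<in> V \<inter> Oo" "\<psi> w = \<psi> q" by auto
      then show "w \<in> V \<inter> Oo" using chart_inj[OF cV] w(1) by (metis IntD1 inj_onD)
    qed
    have SL: "S \<inter> L = {}" using SVO Oo_def by auto
    have Sc: "compactin TY S" unfolding S_def Sof_def y_def[symmetric]
      by (rule chart_preimage_compact[OF cV compact_cball cb])
    define \<W> where "\<W> = {W \<in> \<V>. W \<inter> S \<noteq> {}}"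
    have fW: "finite \<W>" unfolding \<W>_def by (rule lf_compact[OF VV(4) Sc])
    define L' where "L' = L \<union> S \<union> \<Union>(Cf ` \<W>)"
    have "compactin TY (\<Union>(Cf ` \<W>))"
      by (rule compactin_Union) (use fW Cf \<W>_def in auto)
    then have L'c: "compactin TY L'" unfolding L'_def using L Sc by (simp add: compactin_Un)
    have Wsub: "\<forall>W\<in>\<V>. W \<inter> S \<noteq> {} \<longrightarrow> W \<subseteq> L'" unfolding L'_def \<W>_def using Cf by blast
    show ?thesis
      apply (rule exI[of _ \<epsilon>], rule exI[of _ x], rule exI[of _ V], rule exI[of _ \<psi>], rule exI[of _ r], rule exI[of _ L'])
      using Wsub \<epsilon> x V r cb L'c SL unfolding S_def L'_def y_def by auto
  qed
  define P where "P n s = (case s of (\<epsilon>, x, V, \<psi>, r, L) \<Rightarrow>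
      \<epsilon> \<in> {0<..1} \<and> \<epsilon> < 1 / (real n + 1) \<and> x \<in> K \<and> (V, \<psi>) \<in> AY \<and> u \<epsilon> x \<in> V \<and> r > 0 \<and>
      cball (\<psi> (u \<epsilon> x)) r \<subseteq> \<psi> ` V \<and> compactin TY L \<and> Sof \<epsilon> x V \<psi> r \<subseteq> L \<and>
      (\<forall>W\<in>\<V>. W \<inter> Sof \<epsilon> x V \<psi> r \<noteq> {} \<longrightarrow> W \<subseteq> L))" for n s
  define Q where "Q n s s' = (case s of (\<epsilon>, x, V, \<psi>, r, L) \<Rightarrow> case s' of (\<epsilon>', x', V', \<psi>', r', L') \<Rightarrow>
      \<epsilon>' < \<epsilon> \<and> L \<subseteq> L' \<and> Sof \<epsilon>' x' V' \<psi>' r' \<inter> L = {})"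
    for n :: nat and s s' :: "real \<times> 'a \<times> 'b set \<times> ('b \<Rightarrow> 'f) \<times> real \<times> 'b set"
  have "\<exists>g. \<forall>n. P n (g n) \<and> Q n (g n) (g (Suc n))"
  proof (rule dependent_nat_choice)
    obtain \<epsilon> x V \<psi> r L' where "\<epsilon> \<in> {0<..1} \<and> \<epsilon> < 1 \<and> x \<in> K \<and> (V, \<psi>) \<in> AY \<and> u \<epsilon> x \<in> V \<and> r > 0 \<and>
      cball (\<psi> (u \<epsilon> x)) r \<subseteq> \<psi> ` V \<and> compactin TY L' \<and> {} \<subseteq> L' \<and> Sof \<epsilon> x V \<psi> r \<subseteq> L' \<and>
      Sof \<epsilon> x V \<psi> r \<inter> {} = {} \<and> (\<forall>W\<in>\<V>. W \<inter> Sof \<epsilon> x V \<psi> r \<noteq> {} \<longrightarrow> W \<subseteq> L')"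
      using step[of "{}" 1, OF compactin_empty zero_less_one] by (elim exE) (erule that)
    then show "\<exists>s. P 0 s" unfolding P_def by (intro exI[of _ "(\<epsilon>, x, V, \<psi>, r, L')"]) auto
  next
    fix s n assume Ps: "P n s"
    obtain \<epsilon> x V \<psi> r L where s: "s = (\<epsilon>, x, V, \<psi>, r, L)" by (cases s) auto
    have Lc: "compactin TY L" and epos: "\<epsilon> > 0" using Ps s P_def by auto
    have mpos: "min \<epsilon> (1 / (real (Suc n) + 1)) > 0" using epos by simp
    obtain \<epsilon>' x' V' \<psi>' r' L' where "\<epsilon>' \<in> {0<..1} \<and> \<epsilon>' < min \<epsilon> (1 / (real (Suc n) + 1)) \<and> x' \<in> K \<and> (V', \<psi>') \<in> AY \<and>
      u \<epsilon>' x' \<in> V' \<and> r' > 0 \<and>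
      cball (\<psi>' (u \<epsilon>' x')) r' \<subseteq> \<psi>' ` V' \<and> compactin TY L' \<and> L \<subseteq> L' \<and> Sof \<epsilon>' x' V' \<psi>' r' \<subseteq> L' \<and>
      Sof \<epsilon>' x' V' \<psi>' r' \<inter> L = {} \<and> (\<forall>W\<in>\<V>. W \<inter> Sof \<epsilon>' x' V' \<psi>' r' \<noteq> {} \<longrightarrow> W \<subseteq> L')"
      using step[OF Lc mpos] by (elim exE) (erule that)
    then show "\<exists>s'. P (Suc n) s' \<and> Q n s s'"
      unfolding P_def Q_def s by (intro exI[of _ "(\<epsilon>', x', V', \<psi>', r', L')"]) auto
  qed
  then obtain g where g: "\<And>n. P n (g n)" "\<And>n. Q n (g n) (g (Suc n))" by blast
  define eps where "eps n = fst (g n)" for n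
  define xs where "xs n = fst (snd (g n))" for n
  define Vs where "Vs n = fst (snd (snd (g n)))" for n
  define \<psi>s where "\<psi>s n = fst (snd (snd (snd (g n))))" for n
  define rs where "rs n = fst (snd (snd (snd (snd (g n)))))" for n
  define Ls where "Ls n = snd (snd (snd (snd (snd (g n)))))" for n
  have gn: "g n = (eps n, xs n, Vs n, \<psi>s n, rs n, Ls n)" for n
    unfolding eps_def xs_def Vs_def \<psi>s_def rs_def Ls_def by simp
  define S where "S n = Sof (eps n) (xs n) (Vs n) (\<psi>s n) (rs n)" for n
  have P': "eps n \<in> {0<..1} \<and> eps n < 1 / (real n + 1) \<and> xs n \<in> K \<and> (Vs n, \<psi>s n) \<in> AY \<and>
      u (eps n) (xs n) \<in> Vs n \<and> rs n > 0 \<and>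
      cball (\<psi>s n (u (eps n) (xs n))) (rs n) \<subseteq> \<psi>s n ` Vs n \<and> compactin TY (Ls n) \<and> S n \<subseteq> Ls n \<and>
      (\<forall>W\<in>\<V>. W \<inter> S n \<noteq> {} \<longrightarrow> W \<subseteq> Ls n)" for n
    using g(1)[of n] unfolding gn P_def S_def by simp
  have Q': "eps (Suc n) < eps n \<and> Ls n \<subseteq> Ls (Suc n) \<and> S (Suc n) \<inter> Ls n = {}" for n
    using g(2)[of n] unfolding gn Q_def S_def by simp
  have mono: "Ls m \<subseteq> Ls (m + j)" for m j
    by (induction j) (use Q' in auto)
  have finW: "finite {n. W \<inter> S n \<noteq> {}}" if W: "W \<in> \<V>" for W
  proof (cases "{n. W \<inter> S n \<noteq> {}} = {}")
    case True then show ?thesis by simp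
  next
    case False
    then obtain m where m: "W \<inter> S m \<noteq> {}" by blast
    then have WL: "W \<subseteq> Ls m" using P' W by blast
    have "{n. W \<inter> S n \<noteq> {}} \<subseteq> {..m}"
    proof
      fix n assume n: "n \<in> {n. W \<inter> S n \<noteq> {}}"
      show "n \<in> {..m}"
      proof (rule ccontr)
        assume "n \<notin> {..m}"
        then obtain j where j: "n = Suc (m + j)" by (metis lessThan_iff atMost_iff not_le less_iff_Suc_add)
        have "S n \<inter> Ls (m + j) = {}" using Q'[of "m + j"] j by simp
        then have "S n \<inter> W = {}" using WL mono[of m j] by blast
        then show False using n by blast
      qed
    qed
    then show ?thesis using finite_subset by blast
  qed
  have loc: "\<forall>z\<in>topspace TY. \<exists>W. openin TY W \<and> z \<in> W \<and> finite {n. W \<inter> S n \<noteq> {}}"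
  proof
    fix z assume "z \<in> topspace TY"
    then obtain W where "W \<in> \<V>" "z \<in> W" using VV(2) by blast
    then show "\<exists>W. openin TY W \<and> z \<in> W \<and> finite {n. W \<inter> S n \<noteq> {}}" using VV(1) finW by blast
  qed
  have cpt: "finite {n. C \<inter> S n \<noteq> {}}" if C: "compactin TY C" for C
  proof -
    have "{n. C \<inter> S n \<noteq> {}} \<subseteq> (\<Union>W\<in>{W \<in> \<V>. W \<inter> C \<noteq> {}}. {n. W \<inter> S n \<noteq> {}})"
    proof
      fix n assume "n \<in> {n. C \<inter> S n \<noteq> {}}"
      then obtain w where w: "w \<in> C" "w \<in> S n" by blast
      then have "w \<in> topspace TY" using C compactin_subset_topspace by blast
      then obtain W where "W \<in> \<V>" "w \<in> W" using VV(2) by blast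
      then show "n \<in> (\<Union>W\<in>{W \<in> \<V>. W \<inter> C \<noteq> {}}. {n. W \<inter> S n \<noteq> {}})" using w by blast
    qed
    moreover have "finite (\<Union>W\<in>{W \<in> \<V>. W \<inter> C \<noteq> {}}. {n. W \<inter> S n \<noteq> {}})"
      using lf_compact[OF VV(4) C] finW by auto
    ultimately show ?thesis using finite_subset by blast
  qed
  show ?thesis
    apply (rule exI[of _ eps], rule exI[of _ xs], rule exI[of _ Vs], rule exI[of _ \<psi>s], rule exI[of _ rs])
    using P' Q' loc cpt unfolding S_def Sof_def by auto
qed


lemma cb_comp:
  fixes f :: "'b \<Rightarrow> 'k::real_normed_vector"
  assumes Y: "smooth_manifold TY AY" and f: "smooth_fun AY f" and A: "c_bounded TX TY u"
  shows "c_bounded TX euclidean (\<lambda>\<epsilon> x. f (u \<epsilon> x))"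
  unfolding c_bounded_def
proof (intro allI impI)
  fix K assume K: "compactin TX K"
  obtain e0 K' where e0: "e0 > 0" "compactin TY K'" "\<forall>\<epsilon>\<in>{0<..1}. \<epsilon> < e0 \<longrightarrow> u \<epsilon> ` K \<subseteq> K'"
    using A K unfolding c_bounded_def by blast
  have "compactin euclidean (f ` K')"
    using image_compactin[OF e0(2) smooth_fun_cont[OF Y f]] .
  moreover have "\<forall>\<epsilon>\<in>{0<..1}. \<epsilon> < e0 \<longrightarrow> (\<lambda>x. f (u \<epsilon> x)) ` K \<subseteq> f ` K'" using e0(3) by blast
  ultimately show "\<exists>\<epsilon>0>0. \<exists>K'. compactin euclidean K' \<and> (\<forall>\<epsilon>\<in>{0<..1}. \<epsilon> < \<epsilon>0 \<longrightarrow> (\<lambda>x. f (u \<epsilon> x)) ` K \<subseteq> K')"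
    using e0(1) by blast
qed

lemma cb_mod:
  fixes g :: "real \<Rightarrow> 'a \<Rightarrow> 'k::real_normed_vector"
  assumes "c_bounded TX euclidean g"
  shows "moderate0 TX g"
  unfolding moderate0_def
proof (intro allI impI)
  fix K assume K: "compactin TX K"
  obtain e0 K' where e0: "e0 > 0" "compactin euclidean K'" "\<forall>\<epsilon>\<in>{0<..1}. \<epsilon> < e0 \<longrightarrow> g \<epsilon> ` K \<subseteq> K'"
    using assms K unfolding c_bounded_def by blast
  have "bounded K'" using e0(2) compact_imp_bounded by simp
  then obtain B where B: "\<forall>y\<in>K'. norm y \<le> B" by (meson bounded_iff)
  have "\<forall>\<epsilon>\<in>{0<..1}. \<epsilon> < e0 \<longrightarrow> (\<forall>p\<in>K. norm (g \<epsilon> p) \<le> B * \<epsilon> powr (- real (0::nat)))"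
    using e0(3) B by auto
  then show "\<exists>N::nat. \<exists>C \<epsilon>0. \<epsilon>0 > 0 \<and>
           (\<forall>\<epsilon>\<in>{0<..1}. \<epsilon> < \<epsilon>0 \<longrightarrow> (\<forall>p\<in>K. norm (g \<epsilon> p) \<le> C * \<epsilon> powr (- real N)))"
    using e0(1) by blast
qed

lemma cb_cs:
  assumes A: "c_bounded TX TY u" and x: "x \<in> cs_nets TX"
  shows "(\<lambda>\<epsilon>. u \<epsilon> (x \<epsilon>)) \<in> cs_nets TY"
proof -
  obtain K e0 where K: "compactin TX K" "e0 > 0" "\<forall>\<epsilon>\<in>{0<..1}. \<epsilon> < e0 \<longrightarrow> x \<epsilon> \<in> K"
    using x unfolding cs_nets_def by blast
  obtain e1 K' where e1: "e1 > 0" "compactin TY K'" "\<forall>\<epsilon>\<in>{0<..1}. \<epsilon> < e1 \<longrightarrow> u \<epsilon> ` K \<subseteq> K'"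
    using A K(1) unfolding c_bounded_def by blast
  have "\<forall>\<epsilon>\<in>{0<..1}. \<epsilon> < min e0 e1 \<longrightarrow> u \<epsilon> (x \<epsilon>) \<in> K'" using K(3) e1(3) by auto
  then show ?thesis unfolding cs_nets_def using e1(2) K(2) e1(1)
    by (intro CollectI exI[of _ K'] exI[of _ "min e0 e1"]) auto
qed

lemma large_n: "e0 > 0 \<Longrightarrow> n \<ge> nat \<lceil>1 / e0\<rceil> \<Longrightarrow> 1 / (real n + 1) < e0"
proof -
  assume e0: "e0 > 0" and n: "n \<ge> nat \<lceil>1 / e0\<rceil>"
  have "real n \<ge> 1 / e0" using n by linarith
  then have "real n + 1 > 1 / e0" by linarith
  then show ?thesis using e0 by (simp add: field_simps)
qed

lemma notA:
  fixes TX :: "'a topology" and AY :: "('b set \<times> ('b \<Rightarrow> 'f::euclidean_space)) set"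
    and u :: "real \<Rightarrow> 'a \<Rightarrow> 'b"
  assumes Y: "smooth_manifold TY AY"
    and ucm: "\<And>\<epsilon>. \<epsilon> \<in> {0<..1} \<Longrightarrow> continuous_map TX TY (u \<epsilon>)"
    and nA: "\<not> c_bounded TX TY u"
  shows "(\<exists>f::'b \<Rightarrow> real. smooth_fun AY f \<and> \<not> moderate0 TX (\<lambda>\<epsilon> x. f (u \<epsilon> x))) \<and>
         \<not> (\<forall>x \<in> cs_nets TX. (\<lambda>\<epsilon>. u \<epsilon> (x \<epsilon>)) \<in> cs_nets TY)"
proof -
  obtain K where K: "compactin TX K"
    and H: "\<not> (\<exists>\<epsilon>0>0. \<exists>K'. compactin TY K' \<and> (\<forall>\<epsilon>\<in>{0<..1}. \<epsilon> < \<epsilon>0 \<longrightarrow> u \<epsilon> ` K \<subseteq> K'))"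
    using nA unfolding c_bounded_def by blast
  have nb: "\<exists>\<epsilon>\<in>{0<..1}. \<epsilon> < e0 \<and> \<not> (u \<epsilon> ` K \<subseteq> L)" if L: "compactin TY L" and e0: "e0 > 0" for L e0
  proof -
    have "\<not> (\<forall>\<epsilon>\<in>{0<..1}. \<epsilon> < e0 \<longrightarrow> u \<epsilon> ` K \<subseteq> L)" using H L e0 by blast
    then show ?thesis by blast
  qed
  have ucont: "u \<epsilon> ` K \<subseteq> topspace TY" if "\<epsilon> \<in> {0<..1}" for \<epsilon>
    using ucm[OF that] K compactin_subset_topspace continuous_map_image_subset_topspace by blast
  obtain eps xs V \<psi> r where
    P: "\<And>n. eps n \<in> {0<..1} \<and> eps n < 1 / (real n + 1) \<and> eps (Suc n) < eps n \<and> xs n \<in> K \<and>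
            (V n, \<psi> n) \<in> AY \<and> u (eps n) (xs n) \<in> V n \<and> r n > 0 \<and>
            cball (\<psi> n (u (eps n) (xs n))) (r n) \<subseteq> \<psi> n ` V n"
    and LF: "\<forall>z\<in>topspace TY. \<exists>W. openin TY W \<and> z \<in> W \<and>
            finite {n. W \<inter> {w \<in> V n. \<psi> n w \<in> cball (\<psi> n (u (eps n) (xs n))) (r n)} \<noteq> {}}"
    and CF: "\<forall>C. compactin TY C \<longrightarrow>
            finite {n. C \<inter> {w \<in> V n. \<psi> n w \<in> cball (\<psi> n (u (eps n) (xs n))) (r n)} \<noteq> {}}"
    using escape[OF Y ucont nb] by blast
  define y where "y n = u (eps n) (xs n)" for n
  define c where "c n = \<psi> n (y n)" for n
  define S where "S n = {w \<in> V n. \<psi> n w \<in> cball (c n) (r n)}" for n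
  have yS: "y n \<in> S n" for n using P[of n] unfolding S_def c_def y_def by simp
  have CF': "finite {n. C \<inter> S n \<noteq> {}}" if "compactin TY C" for C
    using CF that unfolding S_def c_def y_def by blast
  have epsdec: "eps n < eps m" if "m < n" for m n
    using that
  proof (induction n)
    case 0 then show ?case by simp
  next
    case (Suc n) then show ?case using P[of n] by (metis less_Suc_eq order.strict_trans)
  qed
  have epsinj: "eps m = eps n \<Longrightarrow> m = n" for m n
    using epsdec by (metis linorder_neqE_nat order.irrefl)
  have part4: "\<not> (\<forall>x \<in> cs_nets TX. (\<lambda>\<epsilon>. u \<epsilon> (x \<epsilon>)) \<in> cs_nets TY)"
  proof
    assume D: "\<forall>x \<in> cs_nets TX. (\<lambda>\<epsilon>. u \<epsilon> (x \<epsilon>)) \<in> cs_nets TY"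
    define xn where "xn \<epsilon> = (if \<exists>n. eps n = \<epsilon> then xs (THE n. eps n = \<epsilon>) else xs 0)" for \<epsilon>
    have xnK: "xn \<epsilon> \<in> K" for \<epsilon> unfolding xn_def using P by auto
    have xn_eps: "xn (eps n) = xs n" for n
    proof -
      have "(THE m. eps m = eps n) = n" using epsinj by (intro the_equality) auto
      then show ?thesis unfolding xn_def by auto
    qed
    have "xn \<in> cs_nets TX" unfolding cs_nets_def using K xnK
      by (intro CollectI exI[of _ K] exI[of _ 1]) auto
    then have "(\<lambda>\<epsilon>. u \<epsilon> (xn \<epsilon>)) \<in> cs_nets TY" using D by blast
    then obtain K'' e0 where K'': "compactin TY K''" "e0 > 0" "\<forall>\<epsilon>\<in>{0<..1}. \<epsilon> < e0 \<longrightarrow> u \<epsilon> (xn \<epsilon>) \<in> K''"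
      unfolding cs_nets_def by blast
    have "{nat \<lceil>1 / e0\<rceil>..} \<subseteq> {n. K'' \<inter> S n \<noteq> {}}"
    proof
      fix n assume "n \<in> {nat \<lceil>1 / e0\<rceil>..}"
      then have "1 / (real n + 1) < e0" using large_n[OF K''(2)] by simp
      then have "eps n < e0" using P[of n] by linarith
      then have "y n \<in> K''" using K''(3) P[of n] xn_eps y_def by auto
      then show "n \<in> {n. K'' \<inter> S n \<noteq> {}}" using yS by blast
    qed
    moreover have "infinite {nat \<lceil>1 / e0\<rceil>..}" by (rule infinite_Ici)
    ultimately show False using CF'[OF K''(1)] finite_subset by blast
  qed
  define a where "a n = real n * eps n powr (- real n) / rho ((r n)^2)" for n
  have rpos: "rho ((r n)^2) > 0" for n using P[of n] by (simp add: rho_pos)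
  have anneg: "a n \<ge> 0" for n unfolding a_def using rpos[of n] by simp
  have LF': "\<And>z. z \<in> topspace TY \<Longrightarrow> \<exists>W. openin TY W \<and> z \<in> W \<and>
               finite {n. W \<inter> {w \<in> V n. \<psi> n w \<in> cball (c n) (r n)} \<noteq> {}}"
    using LF unfolding c_def y_def by blast
  obtain f :: "'b \<Rightarrow> real" where f: "smooth_fun AY f" "\<forall>n. \<forall>w\<in>V n. \<psi> n w = c n \<longrightarrow> a n * rho ((r n)^2) \<le> f w"
    using bump_sum[OF Y, of V \<psi> r c a] P LF' anneg unfolding c_def y_def by blast
  have fy: "real n * eps n powr (- real n) \<le> f (y n)" for n
  proof -
    have "a n * rho ((r n)^2) = real n * eps n powr (- real n)" unfolding a_def using rpos[of n] by simp
    moreover have "y n \<in> V n" using P[of n] y_def by simp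
    ultimately show ?thesis using f(2) c_def by metis
  qed
  have part3: "\<not> moderate0 TX (\<lambda>\<epsilon> x. f (u \<epsilon> x))"
  proof
    assume "moderate0 TX (\<lambda>\<epsilon> x. f (u \<epsilon> x))"
    then obtain N :: nat and C e0 where NC: "e0 > 0"
      "\<forall>\<epsilon>\<in>{0<..1}. \<epsilon> < e0 \<longrightarrow> (\<forall>p\<in>K. norm (f (u \<epsilon> p)) \<le> C * \<epsilon> powr (- real N))"
      using K unfolding moderate0_def by blast
    define n where "n = max (max (nat \<lceil>1 / e0\<rceil>) (N + 1)) (nat \<lceil>C\<rceil> + 1)"
    have "n \<ge> nat \<lceil>1 / e0\<rceil>" unfolding n_def by (meson le_trans max.cobounded1)
    then have "1 / (real n + 1) < e0" by (rule large_n[OF NC(1)])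
    then have en: "eps n < e0" "eps n \<in> {0<..1}" "xs n \<in> K" using P[of n] by auto
    have up: "f (y n) \<le> C * eps n powr (- real N)"
      using NC(2) en y_def by fastforce
    have pp: "eps n powr (- real N) \<le> eps n powr (- real n)"
      using en(2) n_def by (intro powr_mono') auto
    have ppos: "eps n powr (- real N) > 0" using en(2) by simp
    have "real n * eps n powr (- real N) \<le> real n * eps n powr (- real n)"
      using pp by (simp add: mult_left_mono)
    also have "\<dots> \<le> C * eps n powr (- real N)" using fy[of n] up by linarith
    finally have "real n \<le> C" using ppos by simp
    moreover have "real n > C" using n_def by linarith
    ultimately show False by simp
  qed
  show ?thesis using part3 part4 f(1) by blast
qed

theorem proposition3p1:
  fixes TX :: "'a topology" and AX :: "('a set \<times> ('a \<Rightarrow> 'e::euclidean_space)) set"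
    and TY :: "'b topology" and AY :: "('b set \<times> ('b \<Rightarrow> 'f::euclidean_space)) set"
    and u :: "real \<Rightarrow> 'a \<Rightarrow> 'b"
  assumes X: "smooth_manifold TX AX"
    and Y: "smooth_manifold TY AY"
    and u_smooth: "\<forall>\<epsilon>\<in>{0<..1}. smooth_map TX AX TY AY (u \<epsilon>)"
  shows
   "(c_bounded TX TY u
       \<longleftrightarrow> ((\<forall>f::'b \<Rightarrow> real. smooth_fun AY f \<longrightarrow> c_bounded TX euclidean (\<lambda>\<epsilon> x. f (u \<epsilon> x))) \<and>
            (\<forall>f::'b \<Rightarrow> complex. smooth_fun AY f \<longrightarrow> c_bounded TX euclidean (\<lambda>\<epsilon> x. f (u \<epsilon> x))))) \<and>
    (c_bounded TX TY u
       \<longleftrightarrow> ((\<forall>f::'b \<Rightarrow> real. smooth_fun AY f \<longrightarrow> moderate0 TX (\<lambda>\<epsilon> x. f (u \<epsilon> x))) \<and>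
            (\<forall>f::'b \<Rightarrow> complex. smooth_fun AY f \<longrightarrow> moderate0 TX (\<lambda>\<epsilon> x. f (u \<epsilon> x))))) \<and>
    (c_bounded TX TY u
       \<longleftrightarrow> (\<forall>x \<in> cs_nets TX. (\<lambda>\<epsilon>. u \<epsilon> (x \<epsilon>)) \<in> cs_nets TY))"
proof -
  have ucm: "\<And>\<epsilon>. \<epsilon> \<in> {0<..1} \<Longrightarrow> continuous_map TX TY (u \<epsilon>)"
    using u_smooth unfolding smooth_map_def by blast
  define A where "A = c_bounded TX TY u"
  define Br where "Br = (\<forall>f::'b \<Rightarrow> real. smooth_fun AY f \<longrightarrow> c_bounded TX euclidean (\<lambda>\<epsilon> x. f (u \<epsilon> x)))"
  define Bc where "Bc = (\<forall>f::'b \<Rightarrow> complex. smooth_fun AY f \<longrightarrow> c_bounded TX euclidean (\<lambda>\<epsilon> x. f (u \<epsilon> x)))"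
  define Mr where "Mr = (\<forall>f::'b \<Rightarrow> real. smooth_fun AY f \<longrightarrow> moderate0 TX (\<lambda>\<epsilon> x. f (u \<epsilon> x)))"
  define Mc where "Mc = (\<forall>f::'b \<Rightarrow> complex. smooth_fun AY f \<longrightarrow> moderate0 TX (\<lambda>\<epsilon> x. f (u \<epsilon> x)))"
  define D where "D = (\<forall>x \<in> cs_nets TX. (\<lambda>\<epsilon>. u \<epsilon> (x \<epsilon>)) \<in> cs_nets TY)"
  have AB: "A \<Longrightarrow> Br \<and> Bc" unfolding A_def Br_def Bc_def using cb_comp[OF Y, where 'k=real] cb_comp[OF Y, where 'k=complex] by blast
  have BM: "Br \<Longrightarrow> Mr" unfolding Br_def Mr_def using cb_mod[where 'k=real] by blast
  have BMc: "Bc \<Longrightarrow> Mc" unfolding Bc_def Mc_def using cb_mod[where 'k=complex] by blast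
  have AD: "A \<Longrightarrow> D" unfolding A_def D_def using cb_cs by blast
  have nA: "\<not> A \<Longrightarrow> \<not> Mr \<and> \<not> D" unfolding A_def Mr_def D_def using notA[where TX=TX and TY=TY and AY=AY and u=u, OF Y ucm] by blast
  have "(A \<longleftrightarrow> Br \<and> Bc) \<and> (A \<longleftrightarrow> Mr \<and> Mc) \<and> (A \<longleftrightarrow> D)"
    using AB BM BMc AD nA by blast
  then show ?thesis unfolding A_def Br_def Bc_def Mr_def Mc_def D_def .
qed

end
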